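(* There is a constant $C>0$ depending only on $\Omega$ such that for every grid function $f\in\mathcal{G}_N$, \[ \| \nabla_N f \|_6 \le C \| \Delta_N f \|_2 . \]
   Context: Let $K\in\mathbb{N}$, $N=2K+1$, $h=1/N$, $\Omega=(0,1)^3$, with grid points $(x_i,y_j,z_k)=(ih,jh,kh)$. $\mathcal{G}_N$ is the space of real grid functions $f:\mathbb{Z}^3\to\mathbb{R}$ that are $N$-periodic in each index. Norms: $\|f\|_p=(h^3\sum_{i,j,k=0}^{N-1}|f_{i,j,k}|^p)^{1/p}$ for $1\le p<\infty$; for a vector-valued grid function the pointwise Euclidean norm is used inside the sum. Every $f\in\mathcal{G}_N$ has a discrete Fourier expansion $f_{i,j,k}=\sum_{\ell,m,n=-K}^{K}\hat f_{\ell,m,n}\exp(2\pi \mathrm{i}(\ell x_i+m y_j+n z_k))$. The pseudo-spectral derivative $\mathcal{D}_x f$ has coefficients $2\pi\mathrm{i}\ell\,\hat f_{\ell,m,n}$ (similarly $\mathcal{D}_y,\mathcal{D}_z$); $\mathcal{D}_x^2$ has coefficients $-4\pi^2\ell^2\hat f_{\ell,m,n}$, etc. $\nabla_N f=(\mathcal{D}_xf,\mathcal{D}_yf,\mathcal{D}_zf)$ and $\Delta_N=\mathcal{D}_x^2+\mathcal{D}_y^2+\mathcal{D}_z^2$. The constant $C$ is independent of $N$. *)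

theory Defs
  imports Complex_Main
begin

type_synonym grid_fun = "int \<Rightarrow> int \<Rightarrow> int \<Rightarrow> real"

definition periodic_grid :: "nat \<Rightarrow> grid_fun \<Rightarrow> bool" where
  "periodic_grid N f \<longleftrightarrow>
     (\<forall>i j k. f (i + int N) j k = f i j k \<and> f i (j + int N) k = f i j k \<and> f i j (k + int N) = f i j k)"

text \<open>Discrete Fourier coefficient hat f_{l,m,n}, i.e. the unique coefficients of the
  expansion f_{i,j,k} = sum_{l,m,n=-K}^{K} hat f_{l,m,n} exp(2 pi i (l x_i + m y_j + n z_k)),
  with x_i = i h, h = 1/N.\<close>
definition dft_coeff :: "nat \<Rightarrow> grid_fun \<Rightarrow> int \<Rightarrow> int \<Rightarrow> int \<Rightarrow> complex" where
  "dft_coeff N f l m n =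
     (1 / of_nat N ^ 3) *
     (\<Sum>i<N. \<Sum>j<N. \<Sum>k<N. complex_of_real (f (int i) (int j) (int k)) *
        cis (- 2 * pi * (real_of_int l * real i + real_of_int m * real j + real_of_int n * real k) / real N))"

text \<open>For the real symmetric multipliers used below the result is real; we take the
  real part so that the operator maps G_N to G_N.\<close>
definition spec_op :: "nat \<Rightarrow> (int \<Rightarrow> int \<Rightarrow> int \<Rightarrow> complex) \<Rightarrow> grid_fun \<Rightarrow> grid_fun" where
  "spec_op K mult f i j k =
     (let N = 2 * K + 1 in
      Re (\<Sum>l\<in>{-int K..int K}. \<Sum>m\<in>{-int K..int K}. \<Sum>n\<in>{-int K..int K}.
            mult l m n * dft_coeff N f l m n *
            cis (2 * pi * (real_of_int l * real_of_int i + real_of_int m * real_of_int j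
                           + real_of_int n * real_of_int k) / real N)))"

definition Dx :: "nat \<Rightarrow> grid_fun \<Rightarrow> grid_fun" where
  "Dx K = spec_op K (\<lambda>l m n. \<i> * complex_of_real (2 * pi * real_of_int l))"
definition Dy :: "nat \<Rightarrow> grid_fun \<Rightarrow> grid_fun" where
  "Dy K = spec_op K (\<lambda>l m n. \<i> * complex_of_real (2 * pi * real_of_int m))"
definition Dz :: "nat \<Rightarrow> grid_fun \<Rightarrow> grid_fun" where
  "Dz K = spec_op K (\<lambda>l m n. \<i> * complex_of_real (2 * pi * real_of_int n))"

definition Dxx :: "nat \<Rightarrow> grid_fun \<Rightarrow> grid_fun" where
  "Dxx K = spec_op K (\<lambda>l m n. complex_of_real (- 4 * pi^2 * (real_of_int l)^2))"
definition Dyy :: "nat \<Rightarrow> grid_fun \<Rightarrow> grid_fun" where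
  "Dyy K = spec_op K (\<lambda>l m n. complex_of_real (- 4 * pi^2 * (real_of_int m)^2))"
definition Dzz :: "nat \<Rightarrow> grid_fun \<Rightarrow> grid_fun" where
  "Dzz K = spec_op K (\<lambda>l m n. complex_of_real (- 4 * pi^2 * (real_of_int n)^2))"

definition lap_N :: "nat \<Rightarrow> grid_fun \<Rightarrow> grid_fun" where
  "lap_N K f i j k = Dxx K f i j k + Dyy K f i j k + Dzz K f i j k"

definition grid_norm :: "nat \<Rightarrow> real \<Rightarrow> grid_fun \<Rightarrow> real" where
  "grid_norm N p f =
     ((1 / real N) ^ 3 * (\<Sum>i<N. \<Sum>j<N. \<Sum>k<N. \<bar>f (int i) (int j) (int k)\<bar> powr p)) powr (1 / p)"

definition grad_norm :: "nat \<Rightarrow> real \<Rightarrow> grid_fun \<Rightarrow> real" where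
  "grad_norm K p f = grid_norm (2 * K + 1) p
     (\<lambda>i j k. sqrt ((Dx K f i j k)^2 + (Dy K f i j k)^2 + (Dz K f i j k)^2))"

end

theory Submission
  imports Defs "HOL-Analysis.Analysis"
begin

lemma geom1d:
  fixes N :: nat and a :: int
  assumes N: "N > 0" and a: "\<bar>a\<bar> < int N"
  shows "(\<Sum>i<N. cis (2 * pi * (real_of_int a * real i) / real N)) = (if a = 0 then of_nat N else 0)"
proof (cases "a = 0")
  case True then show ?thesis by simp
next
  case False
  define z where "z = cis (2 * pi * real_of_int a / real N)"
  have zi: "cis (2 * pi * (real_of_int a * real i) / real N) = z ^ i" for i
    unfolding z_def Complex.DeMoivre by (rule arg_cong[where f=cis]) (simp add: field_simps)
  have zN: "z ^ N = 1"
  proof -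
    have c: "cos (real_of_int a * (pi*2)) = 1" by (subst cos_one_2pi_int) (rule exI[of _ a], simp)
    then have s: "sin (real_of_int a * (pi*2)) = 0" by (rule cos_one_sin_zero)
    show ?thesis unfolding z_def Complex.DeMoivre using N c s by (simp add: complex_eq_iff)
  qed
  have z1: "z \<noteq> 1"
  proof
    assume "z = 1"
    then have "cos (2 * pi * real_of_int a / real N) = 1" unfolding z_def by (metis cis.sel(1) one_complex.sel(1))
    then obtain n :: int where n: "2 * pi * real_of_int a / real N = real_of_int n * 2 * pi"
      using cos_one_2pi_int by blast
    then have "real_of_int a = real_of_int n * real N" using N by (simp add: field_simps)
    then have "a = n * int N" by (metis of_int_eq_iff of_int_mult of_int_of_nat_eq)
    then have e: "\<bar>a\<bar> = \<bar>n\<bar> * int N" by (simp add: abs_mult)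
    have "n \<noteq> 0" using \<open>a = n * int N\<close> False by auto
    then have "\<bar>n\<bar> * int N \<ge> 1 * int N" by (intro mult_right_mono) auto
    then show False using a e by simp
  qed
  have "(\<Sum>i<N. cis (2 * pi * (real_of_int a * real i) / real N)) = (\<Sum>i<N. z ^ i)" using zi by simp
  also have "\<dots> = 0" using geometric_sum[OF z1] zN by simp
  finally show ?thesis using False by simp
qed

definition QK :: "nat \<Rightarrow> (int \<times> int \<times> int) set" where
  "QK K = {-int K..int K} \<times> {-int K..int K} \<times> {-int K..int K}"
definition GN :: "nat \<Rightarrow> (nat \<times> nat \<times> nat) set" where
  "GN N = {..<N} \<times> {..<N} \<times> {..<N}"
definition ee :: "nat \<Rightarrow> int \<times> int \<times> int \<Rightarrow> nat \<times> nat \<times> nat \<Rightarrow> complex" where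
  "ee N q p = cis (2 * pi * (real_of_int (fst q) * real (fst p) + real_of_int (fst (snd q)) * real (fst (snd p))
      + real_of_int (snd (snd q)) * real (snd (snd p))) / real N)"

lemma finite_QK[simp]: "finite (QK K)" by (simp add: QK_def)
lemma finite_GN[simp]: "finite (GN N)" by (simp add: GN_def)

lemma sum3: "(\<Sum>p\<in>A \<times> B \<times> C. g p) = (\<Sum>a\<in>A. \<Sum>b\<in>B. \<Sum>c\<in>C. g (a, b, c))"
  by (simp add: sum.cartesian_product)

lemma ee_factor: "ee N (l, m, n) (i, j, k) =
   cis (2 * pi * (real_of_int l * real i) / real N) * cis (2 * pi * (real_of_int m * real j) / real N)
   * cis (2 * pi * (real_of_int n * real k) / real N)"
  unfolding ee_def by (simp add: cis_mult add_divide_distrib distrib_left)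

lemma ee_cnj: "ee N (l, m, n) p * cnj (ee N (l', m', n') p) = ee N (l - l', m - m', n - n') p"
  unfolding ee_def by (simp add: cis_cnj cis_mult algebra_simps add_divide_distrib diff_divide_distrib)

lemma sum_ee_factor:
  "(\<Sum>p\<in>GN N. ee N (a, b, c) p) =
    (\<Sum>i<N. cis (2 * pi * (real_of_int a * real i) / real N)) *
    (\<Sum>j<N. cis (2 * pi * (real_of_int b * real j) / real N)) *
    (\<Sum>k<N. cis (2 * pi * (real_of_int c * real k) / real N))"
  unfolding GN_def sum3 ee_factor
  apply (simp only: sum_product)
  apply (simp add: sum_distrib_left sum_distrib_right mult.assoc)
  apply (rule sum.cong[OF refl])
  apply (rule sum.swap)
  done

lemma orth3:
  assumes q: "(l, m, n) \<in> QK K" and q': "(l', m', n') \<in> QK K"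
  shows "(\<Sum>p\<in>GN (2*K+1). ee (2*K+1) (l - l', m - m', n - n') p)
     = (if (l, m, n) = (l', m', n') then of_nat (2*K+1) ^ 3 else 0)"
proof -
  have b: "\<bar>x - y\<bar> < int (2*K+1)" if "x \<in> {-int K..int K}" "y \<in> {-int K..int K}" for x y
    using that by auto
  have "\<bar>l - l'\<bar> < int (2*K+1)" "\<bar>m - m'\<bar> < int (2*K+1)" "\<bar>n - n'\<bar> < int (2*K+1)"
    using q q' unfolding QK_def by (auto intro!: b)
  then show ?thesis
    unfolding sum_ee_factor by (simp only: geom1d zero_less_Suc add.commute[of _ 1]) (auto simp: power3_eq_cube)
qed

lemma parseval:
  assumes S: "S \<subseteq> QK K"
  shows "(\<Sum>p\<in>GN (2*K+1). (cmod (\<Sum>q\<in>S. a q * ee (2*K+1) q p))^2)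
     = real (2*K+1) ^ 3 * (\<Sum>q\<in>S. (cmod (a q))^2)"
proof -
  let ?N = "2*K+1"
  have fS: "finite S" using S by (rule finite_subset) simp
  have "complex_of_real (\<Sum>p\<in>GN ?N. (cmod (\<Sum>q\<in>S. a q * ee ?N q p))^2)
     = (\<Sum>p\<in>GN ?N. (\<Sum>q\<in>S. a q * ee ?N q p) * cnj (\<Sum>q\<in>S. a q * ee ?N q p))"
    by (simp only: of_real_sum complex_norm_square)
  also have "\<dots> = (\<Sum>p\<in>GN ?N. \<Sum>q\<in>S. \<Sum>q'\<in>S. a q * cnj (a q') * (ee ?N q p * cnj (ee ?N q' p)))"
    by (simp only: cnj_sum sum_product complex_cnj_mult mult_ac)
  also have "\<dots> = (\<Sum>q\<in>S. \<Sum>p\<in>GN ?N. \<Sum>q'\<in>S. a q * cnj (a q') * (ee ?N q p * cnj (ee ?N q' p)))"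
    by (rule sum.swap)
  also have "\<dots> = (\<Sum>q\<in>S. \<Sum>q'\<in>S. \<Sum>p\<in>GN ?N. a q * cnj (a q') * (ee ?N q p * cnj (ee ?N q' p)))"
    by (intro sum.cong refl) (rule sum.swap)
  also have "\<dots> = (\<Sum>q\<in>S. \<Sum>q'\<in>S. a q * cnj (a q') * (\<Sum>p\<in>GN ?N. ee ?N q p * cnj (ee ?N q' p)))"
    by (simp only: sum_distrib_left)
  also have "\<dots> = (\<Sum>q\<in>S. \<Sum>q'\<in>S. a q * cnj (a q') * (if q = q' then of_nat ?N ^ 3 else 0))"
  proof (intro sum.cong refl)
    fix q q' assume "q \<in> S" "q' \<in> S"
    then have "q \<in> QK K" "q' \<in> QK K" using S by auto
    then show "a q * cnj (a q') * (\<Sum>p\<in>GN ?N. ee ?N q p * cnj (ee ?N q' p)) = a q * cnj (a q') * (if q = q' then of_nat ?N ^ 3 else 0)"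
      using orth3[of "fst q" "fst (snd q)" "snd (snd q)" K "fst q'" "fst (snd q')" "snd (snd q')"]
      by (cases q; cases q') (simp add: ee_cnj)
  qed
  also have "\<dots> = (\<Sum>q\<in>S. a q * cnj (a q) * of_nat ?N ^ 3)"
    using fS by (simp add: if_distrib sum.delta cong: if_cong)
  also have "\<dots> = complex_of_real (real ?N ^ 3 * (\<Sum>q\<in>S. (cmod (a q))^2))"
    by (simp add: sum_distrib_left sum_distrib_right mult.assoc flip: complex_norm_square mult.assoc[of "a _" "cnj (a _)"]) (simp add: mult.commute)
  finally show ?thesis by (simp only: of_real_eq_iff)
qed

definition nrm2 :: "int \<times> int \<times> int \<Rightarrow> real" where
  "nrm2 q = real_of_int ((fst q)^2 + (fst (snd q))^2 + (snd (snd q))^2)"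

lemma card_QK: "card (QK R) = (2*R+1)^3"
proof -
  have "card {-int R..int R} = 2*R+1" by simp
  then show ?thesis unfolding QK_def by (simp add: card_cartesian_product power3_eq_cube)
qed

lemma QK_mono: "R \<le> R' \<Longrightarrow> QK R \<subseteq> QK R'"
  unfolding QK_def by auto

lemma shell_nrm2:
  assumes "q \<in> QK (Suc R) - QK R"
  shows "real (Suc R)^2 \<le> nrm2 q"
proof -
  obtain l m n where q: "q = (l, m, n)" by (cases q)
  have "\<bar>l\<bar> = int (Suc R) \<or> \<bar>m\<bar> = int (Suc R) \<or> \<bar>n\<bar> = int (Suc R)"
    using assms unfolding q QK_def by auto
  then have "(int (Suc R))^2 \<le> l^2 + m^2 + n^2"
    by (metis (no_types, lifting) add.commute add_increasing power2_abs zero_le_power2 le_add_same_cancel1 order_refl)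
  then have "real_of_int ((int (Suc R))^2) \<le> real_of_int (l^2 + m^2 + n^2)"
    by (simp only: of_int_le_iff)
  then show ?thesis unfolding q nrm2_def by simp
qed

lemma nrm2_pos: "q \<noteq> (0,0,0) \<Longrightarrow> nrm2 q > 0"
proof -
  assume a: "q \<noteq> (0,0,0)"
  obtain l m n where q: "q = (l, m, n)" by (cases q)
  have "l^2 + m^2 + n^2 > 0"
    using a unfolding q by (metis add_pos_nonneg add_nonneg_pos zero_le_power2 zero_less_power2 prod.inject add_nonneg_nonneg order_le_less)
  then show ?thesis unfolding q nrm2_def by (simp only: fst_conv snd_conv of_int_0_less_iff)
qed

lemma lattice_sum: "(\<Sum>q\<in>QK R - {(0,0,0)}. 1 / nrm2 q) \<le> 26 * real R"
proof (induction R)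
  case 0
  have e: "QK 0 - {(0,0,0)} = {}" unfolding QK_def by auto
  show ?case unfolding e by simp
next
  case (Suc R)
  let ?A = "QK R - {(0,0,0)}" and ?B = "QK (Suc R) - QK R"
  have split: "QK (Suc R) - {(0,0,0)} = ?A \<union> ?B"
    using QK_mono[of R "Suc R"] by (auto simp: QK_def)
  have disj: "?A \<inter> ?B = {}" by auto
  have cardB: "card ?B = (2*R+3)^3 - (2*R+1)^3"
  proof -
    have "card ?B = card (QK (Suc R)) - card (QK R)"
      using QK_mono[of R "Suc R"] by (simp add: card_Diff_subset)
    also have "\<dots> = (2*R+3)^3 - (2*R+1)^3" unfolding card_QK
      by (simp add: eval_nat_numeral)
    finally show ?thesis .
  qed
  have cardB': "real (card ?B) \<le> 26 * (real (Suc R))^2"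
  proof -
    have "(2*R+1)^3 \<le> (2*R+3)^3" by (intro power_mono) auto
    then have "real (card ?B) = real (2*R+3)^3 - real (2*R+1)^3"
      unfolding cardB by (simp add: of_nat_diff)
    also have "\<dots> \<le> 26 * (real (Suc R))^2" by (simp add: power2_eq_square power3_eq_cube algebra_simps)
    finally show ?thesis .
  qed
  have "(\<Sum>q\<in>?B. 1 / nrm2 q) \<le> real (card ?B) * (1 / (real (Suc R))^2)"
  proof (rule sum_bounded_above)
    fix q assume "q \<in> ?B"
    then have "real (Suc R)^2 \<le> nrm2 q" by (rule shell_nrm2)
    then show "1 / nrm2 q \<le> 1 / (real (Suc R))^2"
    proof -
      have p: "0 < (real (Suc R))^2" by simp
      then have "0 < nrm2 q" using \<open>real (Suc R)^2 \<le> nrm2 q\<close> by linarith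
      then show ?thesis using divide_left_mono[of "(real (Suc R))^2" "nrm2 q" 1] mult_pos_pos[OF \<open>0<nrm2 q\<close> p]
          \<open>real (Suc R)^2 \<le> nrm2 q\<close> by simp
    qed
  qed
  also have "\<dots> \<le> 26" using cardB' by (simp add: field_simps)
  finally have b: "(\<Sum>q\<in>?B. 1 / nrm2 q) \<le> 26" .
  have "(\<Sum>q\<in>QK (Suc R) - {(0,0,0)}. 1 / nrm2 q) = (\<Sum>q\<in>?A. 1 / nrm2 q) + (\<Sum>q\<in>?B. 1 / nrm2 q)"
    unfolding split by (rule sum.union_disjoint) auto
  also have "\<dots> \<le> 26 * real R + 26" using Suc.IH b by linarith
  finally show ?case by simp
qed

lemma cmod_ee[simp]: "cmod (ee N q p) = 1"
  unfolding ee_def by simp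

lemma nrm2_nonneg: "0 \<le> nrm2 q"
  unfolding nrm2_def by simp

lemma low_bound:
  assumes d0: "d (0,0,0) = 0"
  shows "(cmod (\<Sum>q\<in>QK K \<inter> QK R. d q * ee N q p))^2
          \<le> 26 * real R * (\<Sum>q\<in>QK K. nrm2 q * (cmod (d q))^2)"
proof -
  let ?L = "QK K \<inter> QK R - {(0,0,0)}"
  have fL: "finite ?L" by simp
  have "cmod (\<Sum>q\<in>QK K \<inter> QK R. d q * ee N q p) \<le> (\<Sum>q\<in>QK K \<inter> QK R. cmod (d q * ee N q p))"
    by (rule norm_sum)
  also have "\<dots> = (\<Sum>q\<in>QK K \<inter> QK R. cmod (d q))" by (simp add: norm_mult)
  also have "\<dots> = (\<Sum>q\<in>?L. cmod (d q))"
    by (rule sum.mono_neutral_right) (auto simp: d0)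
  also have "\<dots> = (\<Sum>q\<in>?L. (sqrt (nrm2 q) * cmod (d q)) * (1 / sqrt (nrm2 q)))"
  proof (rule sum.cong[OF refl])
    fix q assume "q \<in> ?L"
    then have "nrm2 q > 0" using nrm2_pos by auto
    then show "cmod (d q) = (sqrt (nrm2 q) * cmod (d q)) * (1 / sqrt (nrm2 q))" by simp
  qed
  finally have le1: "cmod (\<Sum>q\<in>QK K \<inter> QK R. d q * ee N q p) \<le> (\<Sum>q\<in>?L. (sqrt (nrm2 q) * cmod (d q)) * (1 / sqrt (nrm2 q)))" .
  have "(cmod (\<Sum>q\<in>QK K \<inter> QK R. d q * ee N q p))^2 \<le> (\<Sum>q\<in>?L. (sqrt (nrm2 q) * cmod (d q)) * (1 / sqrt (nrm2 q)))^2"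
    using le1 by (intro power_mono) auto
  also have "\<dots> \<le> (\<Sum>q\<in>?L. (sqrt (nrm2 q) * cmod (d q))^2) * (\<Sum>q\<in>?L. (1 / sqrt (nrm2 q))^2)"
    by (rule Cauchy_Schwarz_ineq_sum)
  also have "\<dots> = (\<Sum>q\<in>?L. nrm2 q * (cmod (d q))^2) * (\<Sum>q\<in>?L. 1 / nrm2 q)"
    using nrm2_nonneg by (simp add: power_mult_distrib power_divide)
  also have "\<dots> \<le> (\<Sum>q\<in>QK K. nrm2 q * (cmod (d q))^2) * (26 * real R)"
  proof (rule mult_mono)
    show "(\<Sum>q\<in>?L. nrm2 q * (cmod (d q))^2) \<le> (\<Sum>q\<in>QK K. nrm2 q * (cmod (d q))^2)"
      by (rule sum_mono2) (auto simp: nrm2_nonneg)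
    have "(\<Sum>q\<in>?L. 1 / nrm2 q) \<le> (\<Sum>q\<in>QK R - {(0,0,0)}. 1 / nrm2 q)"
      by (rule sum_mono2) (auto simp: nrm2_nonneg)
    also have "\<dots> \<le> 26 * real R" by (rule lattice_sum)
    finally show "(\<Sum>q\<in>?L. 1 / nrm2 q) \<le> 26 * real R" .
    show "0 \<le> (\<Sum>q\<in>QK K. nrm2 q * (cmod (d q))^2)" by (intro sum_nonneg) (auto simp: nrm2_nonneg)
    show "0 \<le> (\<Sum>q\<in>?L. 1 / nrm2 q)" by (intro sum_nonneg) (simp add: nrm2_nonneg)
  qed
  finally show ?thesis by (simp add: mult_ac)
qed

lemma geo_aux1:
  fixes S X r :: real
  assumes "S \<le> (X - 1) / 15" "X < r"
  shows "S + X \<le> (16 * X - 1) / 15 \<and> S + X \<le> 16/15 * r"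
  using assms by (simp add: field_simps)

lemma geo_aux2:
  fixes S X r :: real
  assumes "S \<le> (X - 1) / 15" "S \<le> 16/15 * r" "1 \<le> X"
  shows "S \<le> (16 * X - 1) / 15 \<and> S \<le> 16/15 * r"
  using assms by (simp add: field_simps)

lemma geo16:
  fixes r :: real
  assumes "0 \<le> r"
  shows "(\<Sum>j<J. of_bool (16^j < r) * 16^j) \<le> 16/15 * r"
proof -
  have "(\<Sum>j<J. of_bool (16^j < r) * (16::real)^j) \<le> ((16::real)^J - 1) / 15 \<and>
        (\<Sum>j<J. of_bool (16^j < r) * (16::real)^j) \<le> 16/15 * r"
  proof (induction J)
    case 0 then show ?case using assms by simp
  next
    case (Suc J)
    have p: "(1::real) \<le> 16^J" by simp
    have e: "(\<Sum>j<Suc J. of_bool (16^j < r) * (16::real)^j) = (\<Sum>j<J. of_bool (16^j < r) * (16::real)^j) + of_bool (16^J < r) * 16^J"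
      by (simp only: sum.lessThan_Suc)
    have e2: "(16::real)^Suc J = 16 * 16^J" by simp
    show ?case
    proof (cases "(16::real)^J < r")
      case True
      then have e': "(\<Sum>j<Suc J. of_bool (16^j < r) * (16::real)^j) = (\<Sum>j<J. of_bool (16^j < r) * (16::real)^j) + 16^J"
        using e by simp
      from Suc.IH have i1: "(\<Sum>j<J. of_bool (16^j < r) * (16::real)^j) \<le> ((16::real)^J - 1) / 15" by blast
      show ?thesis unfolding e' e2 by (rule geo_aux1[OF i1 True])
    next
      case False
      then have e': "(\<Sum>j<Suc J. of_bool (16^j < r) * (16::real)^j) = (\<Sum>j<J. of_bool (16^j < r) * (16::real)^j)"
        using e by simp
      from Suc.IH have i1: "(\<Sum>j<J. of_bool (16^j < r) * (16::real)^j) \<le> ((16::real)^J - 1) / 15"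
        and i2: "(\<Sum>j<J. of_bool (16^j < r) * (16::real)^j) \<le> 16/15 * r" by blast+
      show ?thesis unfolding e' e2 by (rule geo_aux2[OF i1 i2 p])
    qed
  qed
  then show ?thesis by blast
qed

lemma layer:
  fixes x lam :: real
  assumes "0 \<le> lam" "\<bar>x\<bar> \<le> lam * 2^J"
  shows "x^6 \<le> lam^6 + (\<Sum>j<J. (lam * 2^(j+1))^6 * of_bool (lam * 2^j < \<bar>x\<bar>))"
  using assms(2)
proof (induction J)
  case 0
  then have "\<bar>x\<bar>^6 \<le> lam^6" by (intro power_mono) auto
  then show ?case by (simp add: power_even_abs)
next
  case (Suc J)
  have nn: "0 \<le> (lam * 2^(J+1))^6 * of_bool (lam * 2^J < \<bar>x\<bar>)" using assms(1) by simp
  show ?case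
  proof (cases "\<bar>x\<bar> \<le> lam * 2^J")
    case True
    then show ?thesis using Suc.IH nn by simp
  next
    case False
    have "\<bar>x\<bar>^6 \<le> (lam * 2^(J+1))^6" using Suc.prems by (intro power_mono) auto
    then have "x^6 \<le> (lam * 2^(J+1))^6 * of_bool (lam * 2^J < \<bar>x\<bar>)" using False by (simp add: power_even_abs)
    moreover have "0 \<le> (\<Sum>j<J. (lam * 2^(j+1))^6 * of_bool (lam * 2^j < \<bar>x\<bar>))"
      using assms(1) by (intro sum_nonneg) simp
    moreover have "0 \<le> lam^6" using assms(1) by simp
    ultimately show ?thesis unfolding sum.lessThan_Suc by linarith
  qed
qed

lemma notin_QK:
  assumes "q \<notin> QK R"
  shows "real R ^ 2 < nrm2 q"
proof -
  obtain l m n where q: "q = (l, m, n)" by (cases q)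
  have c: "int R < \<bar>l\<bar> \<or> int R < \<bar>m\<bar> \<or> int R < \<bar>n\<bar>" using assms unfolding q QK_def by auto
  have sq: "(int R)^2 < x^2" if "int R < \<bar>x\<bar>" for x :: int
  proof -
    have "(int R)^2 < \<bar>x\<bar>^2" using that by (intro power_strict_mono) auto
    then show ?thesis by simp
  qed
  have "(int R)^2 < l^2 + m^2 + n^2"
    using c sq[of l] sq[of m] sq[of n] zero_le_power2[of l] zero_le_power2[of m] zero_le_power2[of n] by linarith
  then have "real_of_int ((int R)^2) < real_of_int (l^2 + m^2 + n^2)" by (simp only: of_int_less_iff)
  then show ?thesis unfolding q nrm2_def by simp
qed

lemma term_bound:
  fixes lam a cl ch :: real
  assumes lam: "0 \<le> lam" and a: "a \<le> cl + ch" and cl: "cl \<le> lam * 2^j / 2" and ch: "0 \<le> ch"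
  shows "(lam * 2^(j+1))^6 * of_bool (lam * 2^j < a) \<le> 256 * lam^4 * 16^j * ch^2"
proof (cases "lam * 2^j < a")
  case False
  then show ?thesis using lam ch by simp
next
  case True
  let ?t = "lam * 2^j"
  have t0: "0 \<le> ?t" using lam by simp
  have "?t / 2 \<le> ch" using True a cl by linarith
  then have "(?t/2)^2 \<le> ch^2" using t0 by (intro power_mono) auto
  then have "256 * lam^4 * 16^j * (?t/2)^2 \<le> 256 * lam^4 * 16^j * ch^2"
    by (intro mult_left_mono) (use lam in auto)
  moreover have "(lam * 2^(j+1))^6 = 256 * lam^4 * 16^j * (?t/2)^2"
  proof -
    have h: "(16::real)^j = (2^j)^4" by (simp flip: power_mult add: mult.commute[of j 4] power_mult)
    show ?thesis unfolding h by (simp add: power_mult_distrib field_simps eval_nat_numeral)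
  qed
  ultimately show ?thesis using True by simp
qed

lemma pow4: "(4::real)^j = (2^j)^2"
  by (simp flip: power_mult add: mult.commute[of j 2] power_mult)
lemma pow16: "(16::real)^j = (4^j)^2"
  by (simp flip: power_mult add: mult.commute[of j 2] power_mult)

lemma card_GN: "card (GN N) = N^3"
  unfolding GN_def by (simp add: card_cartesian_product power3_eq_cube)

lemma core:
  fixes d :: "int \<times> int \<times> int \<Rightarrow> complex" and K :: nat
  assumes d0: "d (0,0,0) = 0"
  shows "(\<Sum>p\<in>GN (2*K+1). (Re (\<Sum>q\<in>QK K. d q * ee (2*K+1) q p))^6)
     \<le> 5000000 * real (2*K+1)^3 * (\<Sum>q\<in>QK K. nrm2 q * (cmod (d q))^2)^3"
proof -
  define N where "N = 2*K+1"
  define B where "B = (\<Sum>q\<in>QK K. nrm2 q * (cmod (d q))^2)"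
  define F where "F p = (\<Sum>q\<in>QK K. d q * ee N q p)" for p
  define Fl where "Fl j p = (\<Sum>q\<in>QK K \<inter> QK (4^j). d q * ee N q p)" for j :: nat and p
  define Fh where "Fh j p = (\<Sum>q\<in>QK K - QK (4^j). d q * ee N q p)" for j :: nat and p
  define lam where "lam = sqrt (104 * B)"
  have B0: "0 \<le> B" unfolding B_def by (intro sum_nonneg) (simp add: nrm2_nonneg)
  have lam0: "0 \<le> lam" unfolding lam_def using B0 by simp
  have lam2: "lam^2 = 104 * B" unfolding lam_def using B0 by simp
  have Fsplit: "F p = Fl j p + Fh j p" for j p
    unfolding F_def Fl_def Fh_def by (rule sum.Int_Diff) simp
  have Fl_le: "cmod (Fl j p) \<le> lam * 2^j / 2" for j p
  proof -
    have "(cmod (Fl j p))^2 \<le> 26 * real (4^j) * B"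
      unfolding Fl_def B_def by (rule low_bound[where d=d, OF d0])
    also have "\<dots> = (lam * 2^j / 2)^2"
      unfolding power_divide power_mult_distrib lam2 pow4[symmetric] by simp
    finally have sq: "(cmod (Fl j p))^2 \<le> (lam * 2^j / 2)^2" .
    have nn: "0 \<le> lam * 2^j / 2" using lam0 by simp
    show ?thesis by (rule power2_le_imp_le[OF sq nn])
  qed
  have u_bound: "\<bar>Re (F p)\<bar> \<le> lam * 2^K" for p
  proof -
    have "(cmod (F p))^2 \<le> 26 * real K * B"
      using low_bound[where d=d and K=K and R=K and N=N and p=p, OF d0] unfolding F_def B_def by simp
    also have "\<dots> \<le> 104 * 4^K * B"
    proof -
      have "real K \<le> 4^K"
      proof -
        have "K < 2^K" by (rule less_exp)
        also have "(2::nat)^K \<le> 4^K" by (intro power_mono) auto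
        finally have "K \<le> 4^K" by simp
        then show ?thesis by (metis of_nat_le_iff of_nat_numeral of_nat_power)
      qed
      moreover have "(0::real) \<le> 4^K" by simp
      ultimately have "26 * real K \<le> 104 * 4^K" by linarith
      then show ?thesis by (rule mult_right_mono[OF _ B0])
    qed
    also have "\<dots> = (lam * 2^K)^2"
      unfolding power_mult_distrib lam2 pow4[symmetric] by simp
    finally have sq: "(cmod (F p))^2 \<le> (lam * 2^K)^2" .
    have nn: "0 \<le> lam * 2^K" using lam0 by simp
    have "cmod (F p) \<le> lam * 2^K" by (rule power2_le_imp_le[OF sq nn])
    then show ?thesis using abs_Re_le_cmod[of "F p"] by linarith
  qed
  have pt: "(Re (F p))^6 \<le> lam^6 + (\<Sum>j<K. 256 * lam^4 * 16^j * (cmod (Fh j p))^2)" for p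
  proof -
    have "(Re (F p))^6 \<le> lam^6 + (\<Sum>j<K. (lam * 2^(j+1))^6 * of_bool (lam * 2^j < \<bar>Re (F p)\<bar>))"
      by (rule layer[OF lam0 u_bound])
    also have "\<dots> \<le> lam^6 + (\<Sum>j<K. 256 * lam^4 * 16^j * (cmod (Fh j p))^2)"
    proof (intro add_left_mono sum_mono)
      fix j assume "j \<in> {..<K}"
      have "\<bar>Re (F p)\<bar> \<le> cmod (Fl j p) + cmod (Fh j p)"
        using abs_Re_le_cmod[of "F p"] norm_triangle_ineq[of "Fl j p" "Fh j p"] Fsplit[of p j] by simp
      then show "(lam * 2^(j+1))^6 * of_bool (lam * 2^j < \<bar>Re (F p)\<bar>) \<le> 256 * lam^4 * 16^j * (cmod (Fh j p))^2"
        by (rule term_bound[OF lam0 _ Fl_le]) simp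
    qed
    finally show ?thesis .
  qed
  have "(\<Sum>p\<in>GN N. (Re (F p))^6) \<le> (\<Sum>p\<in>GN N. lam^6 + (\<Sum>j<K. 256 * lam^4 * 16^j * (cmod (Fh j p))^2))"
    by (intro sum_mono pt)
  also have "\<dots> = real N^3 * lam^6 + (\<Sum>j<K. 256 * lam^4 * 16^j * (\<Sum>p\<in>GN N. (cmod (Fh j p))^2))"
    by (simp add: sum.distrib card_GN sum_distrib_left sum.swap[of _ "GN N" "{..<K}"])
  also have "\<dots> = real N^3 * lam^6 + real N^3 * (256 * lam^4) * (\<Sum>j<K. 16^j * (\<Sum>q\<in>QK K - QK (4^j). (cmod (d q))^2))"
  proof -
    have "(\<Sum>p\<in>GN N. (cmod (Fh j p))^2) = real N^3 * (\<Sum>q\<in>QK K - QK (4^j). (cmod (d q))^2)" for j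
      unfolding Fh_def N_def by (rule parseval) auto
    then show ?thesis by (simp add: sum_distrib_left mult_ac)
  qed
  also have "\<dots> \<le> real N^3 * lam^6 + real N^3 * (256 * lam^4) * (16/15 * B)"
  proof -
    have "(\<Sum>j<K. 16^j * (\<Sum>q\<in>QK K - QK (4^j). (cmod (d q))^2))
        = (\<Sum>j<K. \<Sum>q\<in>QK K. of_bool (q \<notin> QK (4^j)) * 16^j * (cmod (d q))^2)"
    proof (rule sum.cong[OF refl])
      fix j
      show "16^j * (\<Sum>q\<in>QK K - QK (4^j). (cmod (d q))^2) = (\<Sum>q\<in>QK K. of_bool (q \<notin> QK (4^j)) * 16^j * (cmod (d q))^2)"
        unfolding sum_distrib_left by (rule sum.mono_neutral_cong_left) auto
    qed
    also have "\<dots> = (\<Sum>q\<in>QK K. (cmod (d q))^2 * (\<Sum>j<K. of_bool (q \<notin> QK (4^j)) * 16^j))"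
      by (subst sum.swap) (simp only: sum_distrib_left mult_ac)
    also have "\<dots> \<le> (\<Sum>q\<in>QK K. (cmod (d q))^2 * (16/15 * nrm2 q))"
    proof (intro sum_mono mult_left_mono)
      fix q
      have "(\<Sum>j<K. of_bool (q \<notin> QK (4^j)) * (16::real)^j) \<le> (\<Sum>j<K. of_bool (16^j < nrm2 q) * 16^j)"
      proof (intro sum_mono)
        fix j
        have "q \<notin> QK (4^j) \<Longrightarrow> (16::real)^j < nrm2 q"
          using notin_QK[of q "4^j"] by (simp add: pow16)
        then show "of_bool (q \<notin> QK (4^j)) * (16::real)^j \<le> of_bool (16^j < nrm2 q) * 16^j" by auto
      qed
      also have "\<dots> \<le> 16/15 * nrm2 q" by (rule geo16[OF nrm2_nonneg])
      finally show "(\<Sum>j<K. of_bool (q \<notin> QK (4^j)) * (16::real)^j) \<le> 16/15 * nrm2 q" .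
    qed simp
    also have "\<dots> = 16/15 * B" unfolding B_def by (simp add: sum_distrib_left mult_ac)
    finally have "(\<Sum>j<K. 16^j * (\<Sum>q\<in>QK K - QK (4^j). (cmod (d q))^2)) \<le> 16/15 * B" .
    then show ?thesis using lam0 by (intro add_left_mono mult_left_mono) auto
  qed
  also have "\<dots> \<le> 5000000 * real N^3 * B^3"
  proof -
    have l6: "lam^6 = (104*B)^3" by (metis lam2 power_mult numeral_times_numeral semiring_norm(12) semiring_norm(14) semiring_norm(15) semiring_norm(16) num_double)
    have l4: "lam^4 = (104*B)^2" by (metis lam2 power_mult numeral_times_numeral semiring_norm(12) semiring_norm(14) num_double)
    have "real N^3 * lam^6 + real N^3 * (256 * lam^4) * (16/15 * B) = real N^3 * B^3 * (104^3 + 256 * 104^2 * 16/15)"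
      unfolding l6 l4 by (simp add: power_mult_distrib algebra_simps eval_nat_numeral)
    also have "\<dots> \<le> real N^3 * B^3 * 5000000"
      using B0 by (intro mult_left_mono) auto
    finally show ?thesis by (simp add: mult_ac)
  qed
  finally show ?thesis unfolding N_def F_def B_def .
qed

definition cc :: "nat \<Rightarrow> grid_fun \<Rightarrow> int \<times> int \<times> int \<Rightarrow> complex" where
  "cc N f q = dft_coeff N f (fst q) (fst (snd q)) (snd (snd q))"

lemma spec_eq:
  "spec_op K mu0 f (int i) (int j) (int k) =
     Re (\<Sum>q\<in>QK K. mu0 (fst q) (fst (snd q)) (snd (snd q)) * cc (2*K+1) f q * ee (2*K+1) q (i, j, k))"
  unfolding spec_op_def Let_def QK_def sum3 ee_def cc_def by simp

lemma cnj_ee: "cnj (ee N (l, m, n) p) = ee N (-l, -m, -n) p"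
  unfolding ee_def by (simp add: cis_cnj algebra_simps minus_divide_left)

lemma cc_sym: "cc N f (-l, -m, -n) = cnj (cc N f (l, m, n))"
  unfolding cc_def dft_coeff_def by (simp add: cnj_sum cis_cnj algebra_simps minus_divide_left)

lemma QK_neg: "(\<lambda>(l, m, n). (-l, -m, -n)) ` QK K = QK K"
proof
  show "(\<lambda>(l, m, n). (-l, -m, -n)) ` QK K \<subseteq> QK K" unfolding QK_def by auto
  show "QK K \<subseteq> (\<lambda>(l, m, n). (-l, -m, -n)) ` QK K"
  proof
    fix q assume q: "q \<in> QK K"
    obtain l m n where qq: "q = (l, m, n)" by (cases q)
    have "(-l, -m, -n) \<in> QK K" using q unfolding qq QK_def by auto
    moreover have "q = (\<lambda>(l, m, n). (-l, -m, -n)) (-l, -m, -n)" unfolding qq by simp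
    ultimately show "q \<in> (\<lambda>(l, m, n). (-l, -m, -n)) ` QK K" by blast
  qed
qed

lemma inj_neg: "inj_on (\<lambda>(l::int, m::int, n::int). (-l, -m, -n)) A"
  by (auto simp: inj_on_def)

lemma real_sum:
  fixes mu :: "int \<times> int \<times> int \<Rightarrow> complex"
  assumes sym: "\<And>l m n. mu (-l, -m, -n) = cnj (mu (l, m, n))"
  shows "cnj (\<Sum>q\<in>QK K. mu q * ee N q p) = (\<Sum>q\<in>QK K. mu q * ee N q p)"
proof -
  let ?g = "\<lambda>(l::int, m::int, n::int). (-l, -m, -n)"
  have "cnj (\<Sum>q\<in>QK K. mu q * ee N q p) = (\<Sum>q\<in>QK K. mu (?g q) * ee N (?g q) p)"
    unfolding cnj_sum by (intro sum.cong refl) (auto simp: sym cnj_ee)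
  also have "\<dots> = (\<Sum>q\<in>?g ` QK K. mu q * ee N q p)"
    by (rule sum.reindex[OF inj_neg, symmetric, unfolded comp_def])
  also have "\<dots> = (\<Sum>q\<in>QK K. mu q * ee N q p)" unfolding QK_neg ..
  finally show ?thesis .
qed

lemma nrm2_neg: "nrm2 (-l, -m, -n) = nrm2 (l, m, n)"
  unfolding nrm2_def by simp

lemma comp_bound:
  fixes w :: "int \<times> int \<times> int \<Rightarrow> int" and c :: "int \<times> int \<times> int \<Rightarrow> complex"
  assumes w0: "w (0,0,0) = 0" and wle: "\<And>q. real_of_int ((w q)^2) \<le> nrm2 q"
  shows "(\<Sum>p\<in>GN (2*K+1). (Re (\<Sum>q\<in>QK K. \<i> * complex_of_real (2 * pi * real_of_int (w q)) * c q * ee (2*K+1) q p))^6)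
     \<le> 5000000 * real (2*K+1)^3 * (4 * pi^2 * (\<Sum>q\<in>QK K. (nrm2 q)^2 * (cmod (c q))^2))^3"
proof -
  define d where "d q = \<i> * complex_of_real (2 * pi * real_of_int (w q)) * c q" for q
  have d0: "d (0,0,0) = 0" unfolding d_def using w0 by simp
  have "(\<Sum>p\<in>GN (2*K+1). (Re (\<Sum>q\<in>QK K. d q * ee (2*K+1) q p))^6)
     \<le> 5000000 * real (2*K+1)^3 * (\<Sum>q\<in>QK K. nrm2 q * (cmod (d q))^2)^3"
    by (rule core[where d=d, OF d0])
  also have "\<dots> \<le> 5000000 * real (2*K+1)^3 * (4 * pi^2 * (\<Sum>q\<in>QK K. (nrm2 q)^2 * (cmod (c q))^2))^3"
  proof -
    have "(\<Sum>q\<in>QK K. nrm2 q * (cmod (d q))^2) \<le> (\<Sum>q\<in>QK K. 4 * pi^2 * ((nrm2 q)^2 * (cmod (c q))^2))"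
    proof (rule sum_mono)
      fix q
      have cd: "(cmod (d q))^2 = 4 * pi^2 * real_of_int ((w q)^2) * (cmod (c q))^2"
        unfolding d_def by (simp add: norm_mult power_mult_distrib)
      have "nrm2 q * (4 * pi^2 * real_of_int ((w q)^2) * (cmod (c q))^2) \<le> nrm2 q * (4 * pi^2 * nrm2 q * (cmod (c q))^2)"
        using wle[of q] nrm2_nonneg[of q] by (intro mult_left_mono mult_right_mono) auto
      then show "nrm2 q * (cmod (d q))^2 \<le> 4 * pi^2 * ((nrm2 q)^2 * (cmod (c q))^2)"
        unfolding cd by (simp add: power2_eq_square mult_ac)
    qed
    also have "\<dots> = 4 * pi^2 * (\<Sum>q\<in>QK K. (nrm2 q)^2 * (cmod (c q))^2)" by (simp add: sum_distrib_left)
    finally have le: "(\<Sum>q\<in>QK K. nrm2 q * (cmod (d q))^2) \<le> 4 * pi^2 * (\<Sum>q\<in>QK K. (nrm2 q)^2 * (cmod (c q))^2)" .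
    have "0 \<le> (\<Sum>q\<in>QK K. nrm2 q * (cmod (d q))^2)" by (intro sum_nonneg) (simp add: nrm2_nonneg)
    then have "(\<Sum>q\<in>QK K. nrm2 q * (cmod (d q))^2)^3 \<le> (4 * pi^2 * (\<Sum>q\<in>QK K. (nrm2 q)^2 * (cmod (c q))^2))^3"
      using le by (intro power_mono) auto
    then show ?thesis by (intro mult_left_mono) auto
  qed
  finally show ?thesis unfolding d_def .
qed

lemma cmod_pi: "cmod (complex_of_real pi) = pi"
  using pi_ge_zero by simp

lemma lap_sum:
  "(\<Sum>p\<in>GN (2*K+1). (lap_N K f (int (fst p)) (int (fst (snd p))) (int (snd (snd p))))^2)
     = real (2*K+1)^3 * (16 * pi^4 * (\<Sum>q\<in>QK K. (nrm2 q)^2 * (cmod (cc (2*K+1) f q))^2))"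
proof -
  define N where "N = 2*K+1"
  define mu where "mu q = complex_of_real (- 4 * pi^2 * nrm2 q) * cc N f q" for q
  define G where "G p = (\<Sum>q\<in>QK K. mu q * ee N q p)" for p
  have lapG: "lap_N K f (int i) (int j) (int k) = Re (G (i, j, k))" for i j k
  proof -
    have "G (i, j, k) = (\<Sum>q\<in>QK K. complex_of_real (- 4 * pi^2 * (real_of_int (fst q))^2) * cc N f q * ee N q (i, j, k))
       + (\<Sum>q\<in>QK K. complex_of_real (- 4 * pi^2 * (real_of_int (fst (snd q)))^2) * cc N f q * ee N q (i, j, k))
       + (\<Sum>q\<in>QK K. complex_of_real (- 4 * pi^2 * (real_of_int (snd (snd q)))^2) * cc N f q * ee N q (i, j, k))"
      unfolding G_def sum.distrib[symmetric] by (intro sum.cong refl) (simp add: mu_def nrm2_def algebra_simps)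
    then show ?thesis
      unfolding lap_N_def Dxx_def Dyy_def Dzz_def spec_eq N_def by simp
  qed
  have realG: "Im (G p) = 0" for p
  proof -
    have "cnj (G p) = G p" unfolding G_def
      by (rule real_sum) (simp add: mu_def cc_sym nrm2_neg)
    then have "Im (cnj (G p)) = Im (G p)" by simp
    then show ?thesis by simp
  qed
  have "(\<Sum>p\<in>GN N. (lap_N K f (int (fst p)) (int (fst (snd p))) (int (snd (snd p))))^2)
      = (\<Sum>p\<in>GN N. (cmod (G p))^2)"
  proof (rule sum.cong[OF refl])
    fix p :: "nat \<times> nat \<times> nat"
    obtain i j k where p: "p = (i, j, k)" by (cases p)
    show "(lap_N K f (int (fst p)) (int (fst (snd p))) (int (snd (snd p))))^2 = (cmod (G p))^2"
      unfolding p using lapG realG[of "(i,j,k)"] by (simp add: cmod_power2)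
  qed
  also have "\<dots> = real N^3 * (\<Sum>q\<in>QK K. (cmod (mu q))^2)"
    unfolding G_def N_def by (rule parseval) simp
  also have "\<dots> = real N^3 * (16 * pi^4 * (\<Sum>q\<in>QK K. (nrm2 q)^2 * (cmod (cc N f q))^2))"
    unfolding mu_def by (simp add: norm_mult norm_power cmod_pi power_mult_distrib sum_distrib_left mult_ac abs_mult nrm2_nonneg flip: power_mult)
  finally show ?thesis unfolding N_def .
qed


lemma abs_powr2: "\<bar>x::real\<bar> powr 2 = x^2"
proof (cases "x = 0")
  case False
  then have "\<bar>x\<bar> powr 2 = \<bar>x\<bar>^2" by (subst powr_numeral) auto
  then show ?thesis by simp
qed simp

lemma abs_powr6: "\<bar>x::real\<bar> powr 6 = x^6"
proof (cases "x = 0")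
  case False
  then have "\<bar>x\<bar> powr 6 = \<bar>x\<bar>^6" by (subst powr_numeral) auto
  then show ?thesis by (simp add: power_even_abs)
qed simp

lemma cube_powr: "0 \<le> (X::real) \<Longrightarrow> (X^3) powr (1/6) = X powr (1/2)"
proof (cases "X = 0")
  case False
  assume "0 \<le> X"
  then have X: "0 < X" using False by simp
  have e: "X^3 = X powr 3" using powr_numeral[OF less_imp_le[OF X], of "num.Bit1 num.One"] by simp
  have "(X powr 3) powr (1/6) = X powr (3 * (1/6))" by (rule powr_powr)
  also have "(3::real) * (1/6) = 1/2" by simp
  finally show ?thesis unfolding e .
qed simp

lemma cube_convex:
  fixes a b c :: real
  assumes "0 \<le> a" "0 \<le> b" "0 \<le> c"
  shows "(a + b + c)^3 \<le> 9 * (a^3 + b^3 + c^3)"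
proof -
  have i1: "3 * (a^2 + b^2 + c^2) - (a + b + c)^2 = (a - b)^2 + (b - c)^2 + (a - c)^2"
    by (simp add: power2_eq_square algebra_simps)
  have i2: "3 * (a^3 + b^3 + c^3) - (a + b + c) * (a^2 + b^2 + c^2) = (a - b)^2 * (a + b) + (b - c)^2 * (b + c) + (a - c)^2 * (a + c)"
    by (simp add: power2_eq_square power3_eq_cube algebra_simps)
  have "0 \<le> (a - b)^2 + (b - c)^2 + (a - c)^2" by simp
  then have s1: "(a + b + c)^2 \<le> 3 * (a^2 + b^2 + c^2)" using i1 by linarith
  have s2: "(a + b + c) * (a^2 + b^2 + c^2) \<le> 3 * (a^3 + b^3 + c^3)"
  proof -
    have "0 \<le> (a - b)^2 * (a + b) + (b - c)^2 * (b + c) + (a - c)^2 * (a + c)"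
      using assms by (intro add_nonneg_nonneg mult_nonneg_nonneg) auto
    then show ?thesis using i2 by linarith
  qed
  have "(a + b + c)^3 = (a + b + c)^2 * (a + b + c)" by (simp add: power2_eq_square power3_eq_cube)
  also have "\<dots> \<le> 3 * (a^2 + b^2 + c^2) * (a + b + c)"
    using s1 assms by (intro mult_right_mono) auto
  also have "\<dots> = 3 * ((a + b + c) * (a^2 + b^2 + c^2))" by (simp add: mult_ac)
  also have "\<dots> \<le> 3 * (3 * (a^3 + b^3 + c^3))" using s2 by simp
  finally show ?thesis by simp
qed

lemma nest_GN: "(\<Sum>i<N. \<Sum>j<N. \<Sum>k<N. h i j k) = (\<Sum>p\<in>GN N. h (fst p) (fst (snd p)) (snd (snd p)))"
  unfolding GN_def sum3 by simp

theorem proposition2p3: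
  shows "\<exists>C > 0. \<forall>(K::nat) (f::grid_fun). K \<ge> 1 \<longrightarrow> periodic_grid (2 * K + 1) f \<longrightarrow>
           grad_norm K 6 f \<le> C * grid_norm (2 * K + 1) 2 (lap_N K f)"
proof (intro exI[of _ "(27 * 5000000) powr (1/6)"] conjI allI impI)
  show "(0::real) < (27 * 5000000) powr (1/6)" by simp
  fix K :: nat and f :: grid_fun
  define N where "N = 2*K+1"
  define T where "T = (\<Sum>q\<in>QK K. (nrm2 q)^2 * (cmod (cc N f q))^2)"
  define M :: real where "M = 5000000"
  have T0: "0 \<le> T" unfolding T_def by (intro sum_nonneg) simp
  have N0: "0 < real N" unfolding N_def by simp
  define gx where "gx p = Dx K f (int (fst p)) (int (fst (snd p))) (int (snd (snd p)))" for p :: "nat \<times> nat \<times> nat"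
  define gy where "gy p = Dy K f (int (fst p)) (int (fst (snd p))) (int (snd (snd p)))" for p :: "nat \<times> nat \<times> nat"
  define gz where "gz p = Dz K f (int (fst p)) (int (fst (snd p))) (int (snd (snd p)))" for p :: "nat \<times> nat \<times> nat"
  have bx: "(\<Sum>p\<in>GN N. (gx p)^6) \<le> M * real N^3 * (4 * pi^2 * T)^3"
  proof -
    have "gx p = Re (\<Sum>q\<in>QK K. \<i> * complex_of_real (2 * pi * real_of_int (fst q)) * cc N f q * ee N q p)" for p
      unfolding gx_def Dx_def N_def by (cases p) (simp add: spec_eq)
    then show ?thesis unfolding M_def T_def N_def
      by (simp only:) (rule comp_bound, simp, simp add: nrm2_def)
  qed
  have by': "(\<Sum>p\<in>GN N. (gy p)^6) \<le> M * real N^3 * (4 * pi^2 * T)^3"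
  proof -
    have "gy p = Re (\<Sum>q\<in>QK K. \<i> * complex_of_real (2 * pi * real_of_int (fst (snd q))) * cc N f q * ee N q p)" for p
      unfolding gy_def Dy_def N_def by (cases p) (simp add: spec_eq)
    then show ?thesis unfolding M_def T_def N_def
      by (simp only:) (rule comp_bound, simp, simp add: nrm2_def)
  qed
  have bz: "(\<Sum>p\<in>GN N. (gz p)^6) \<le> M * real N^3 * (4 * pi^2 * T)^3"
  proof -
    have "gz p = Re (\<Sum>q\<in>QK K. \<i> * complex_of_real (2 * pi * real_of_int (snd (snd q))) * cc N f q * ee N q p)" for p
      unfolding gz_def Dz_def N_def by (cases p) (simp add: spec_eq)
    then show ?thesis unfolding M_def T_def N_def
      by (simp only:) (rule comp_bound, simp, simp add: nrm2_def)
  qed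
  define Y where "Y = (1 / real N)^3 * (\<Sum>p\<in>GN N. \<bar>sqrt ((gx p)^2 + (gy p)^2 + (gz p)^2)\<bar> powr 6)"
  define X where "X = (1 / real N)^3 * (\<Sum>p\<in>GN N. \<bar>lap_N K f (int (fst p)) (int (fst (snd p))) (int (snd (snd p)))\<bar> powr 2)"
  have gradY: "grad_norm K 6 f = Y powr (1/6)"
    unfolding grad_norm_def grid_norm_def Y_def N_def nest_GN gx_def gy_def gz_def by simp
  have lapX: "grid_norm (2 * K + 1) 2 (lap_N K f) = X powr (1/2)"
    unfolding grid_norm_def X_def N_def nest_GN by simp
  have X_eq: "X = 16 * pi^4 * T"
  proof -
    have "X = (1 / real N)^3 * (real N^3 * (16 * pi^4 * T))"
      unfolding X_def abs_powr2 T_def N_def by (simp only: lap_sum)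
    then show ?thesis using N0 by (simp add: field_simps)
  qed
  have Y_le: "Y \<le> 27 * M * X^3"
  proof -
    have "(\<Sum>p\<in>GN N. \<bar>sqrt ((gx p)^2 + (gy p)^2 + (gz p)^2)\<bar> powr 6)
        \<le> (\<Sum>p\<in>GN N. 9 * ((gx p)^6 + (gy p)^6 + (gz p)^6))"
    proof (rule sum_mono)
      fix p
      have "\<bar>sqrt ((gx p)^2 + (gy p)^2 + (gz p)^2)\<bar> powr 6 = ((gx p)^2 + (gy p)^2 + (gz p)^2)^3"
      proof -
        have e: "(sqrt ((gx p)^2 + (gy p)^2 + (gz p)^2))^6 = ((sqrt ((gx p)^2 + (gy p)^2 + (gz p)^2))^2)^3"
          unfolding power_mult[symmetric] by simp
        have nn: "0 \<le> (gx p)^2 + (gy p)^2 + (gz p)^2" by simp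
        show ?thesis unfolding abs_powr6 e real_sqrt_pow2[OF nn] by (rule refl)
      qed
      also have "\<dots> \<le> 9 * (((gx p)^2)^3 + ((gy p)^2)^3 + ((gz p)^2)^3)"
        by (rule cube_convex) auto
      also have "\<dots> = 9 * ((gx p)^6 + (gy p)^6 + (gz p)^6)" by (simp flip: power_mult)
      finally show "\<bar>sqrt ((gx p)^2 + (gy p)^2 + (gz p)^2)\<bar> powr 6 \<le> 9 * ((gx p)^6 + (gy p)^6 + (gz p)^6)" .
    qed
    also have "\<dots> = 9 * ((\<Sum>p\<in>GN N. (gx p)^6) + (\<Sum>p\<in>GN N. (gy p)^6) + (\<Sum>p\<in>GN N. (gz p)^6))"
      by (simp add: sum.distrib sum_distrib_left)
    also have "\<dots> \<le> 9 * (3 * (M * real N^3 * (4 * pi^2 * T)^3))"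
      using bx by' bz by simp
    finally have s: "(\<Sum>p\<in>GN N. \<bar>sqrt ((gx p)^2 + (gy p)^2 + (gz p)^2)\<bar> powr 6) \<le> 27 * (M * real N^3 * (4 * pi^2 * T)^3)"
      by simp
    have "Y \<le> (1 / real N)^3 * (27 * (M * real N^3 * (4 * pi^2 * T)^3))"
      unfolding Y_def using s by (intro mult_left_mono) auto
    also have "\<dots> = 27 * M * (64 * pi^6 * T^3)"
      using N0 by (simp add: field_simps power_mult_distrib flip: power_mult)
    also have "\<dots> \<le> 27 * M * (4096 * pi^12 * T^3)"
    proof -
      have p1: "1 \<le> pi" using pi_gt3 by simp
      have "pi^6 \<le> pi^12" using p1 by (intro power_increasing) auto
      moreover have "0 \<le> pi^12" by simp
      ultimately have "64 * pi^6 \<le> 4096 * pi^12" by linarith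
      moreover have "0 \<le> T^3" using T0 by simp
      ultimately have "64 * pi^6 * T^3 \<le> 4096 * pi^12 * T^3" by (rule mult_right_mono)
      then show ?thesis unfolding M_def by simp
    qed
    also have "\<dots> = 27 * M * X^3"
      unfolding X_eq by (simp add: power_mult_distrib flip: power_mult)
    finally show ?thesis .
  qed
  have X0: "0 \<le> X" unfolding X_eq using T0 by simp
  have Y0: "0 \<le> Y" unfolding Y_def by (intro mult_nonneg_nonneg sum_nonneg) auto
  have "Y powr (1/6) \<le> (27 * M * X^3) powr (1/6)"
    using Y_le Y0 by (intro powr_mono2) auto
  also have "\<dots> = (27 * M) powr (1/6) * (X^3) powr (1/6)"
    using X0 unfolding M_def by (simp add: powr_mult)
  also have "\<dots> = (27 * M) powr (1/6) * X powr (1/2)" using cube_powr[OF X0] by simp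
  finally show "grad_norm K 6 f \<le> (27 * 5000000) powr (1/6) * grid_norm (2 * K + 1) 2 (lap_N K f)"
    unfolding gradY lapX M_def by simp
qed

end
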